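(* Let $G$ be a simple undirected graph on $\{1,\dots,n\}$ with adjacency $g_{ij}$ and degrees $d_i$. Let the exposure be binary, $e_i=I\big(\sum_jg_{ij}z_j>0\big)$, and suppose $Y_i(z_i,e_i)=\alpha_i+\beta_iz_i+\gamma_ie_i+\theta_iz_ie_i$. Under a completely randomized design with $n_t$ treated and $n_c=n-n_t$ control units, $1\le n_t\le n-1$, the estimator $$\hat\beta_{naive}=\frac{\sum_i Y_i^{obs}Z_i}{\sum_i Z_i}-\frac{\sum_i Y_i^{obs}(1-Z_i)}{\sum_i(1-Z_i)}$$ satisfies, with $\mathrm{DTE}=\frac1n\sum_i\big(Y_i(1,0)-Y_i(0,0)\big)$, $$\mathbb E[\hat\beta_{naive}]-\mathrm{DTE}=-\frac1n\sum_i\gamma_i\frac{\binom{n_c-1}{d_i-1}}{\binom{n-1}{d_i}}+\frac1n\sum_i\theta_i\left(1-\frac{\binom{n_c}{d_i}}{\binom{n-1}{d_i}}\right).$$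
   Context: Completely randomized design: $\mathbf Z$ is uniform over vectors in $\{0,1\}^n$ with exactly $n_t$ ones. $E_i=I(\sum_jg_{ij}Z_j>0)$, $Y_i^{obs}=Y_i(Z_i,E_i)$. Binomial coefficients follow the convention $\binom ab=0$ if $b<0$ or $b>a$. *)

theory Defs
  imports "HOL-Probability.Probability"
begin

definition ibinom :: "int \<Rightarrow> int \<Rightarrow> real" where
  "ibinom a b = (if b < 0 \<or> b > a then 0 else real (nat a choose nat b))"

definition simple_graph :: "nat \<Rightarrow> (nat \<Rightarrow> nat \<Rightarrow> bool) \<Rightarrow> bool" where
  "simple_graph n g \<longleftrightarrow> (\<forall>i<n. \<forall>j<n. g i j = g j i) \<and> (\<forall>i<n. \<not> g i i)"

definition degree :: "nat \<Rightarrow> (nat \<Rightarrow> nat \<Rightarrow> bool) \<Rightarrow> nat \<Rightarrow> nat" where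
  "degree n g i = card {j. j < n \<and> g i j}"

text \<open>Completely randomized design: the set of treated units is uniform over subsets
  of {0..<n} of size nt (Z_j = 1 iff j is in the set).\<close>
definition crd :: "nat \<Rightarrow> nat \<Rightarrow> nat set pmf" where
  "crd n nt = pmf_of_set {S. S \<subseteq> {..<n} \<and> card S = nt}"

definition Zind :: "nat set \<Rightarrow> nat \<Rightarrow> real" where
  "Zind S j = (if j \<in> S then 1 else 0)"

definition expo :: "nat \<Rightarrow> (nat \<Rightarrow> nat \<Rightarrow> bool) \<Rightarrow> nat set \<Rightarrow> nat \<Rightarrow> real" where
  "expo n g S i = (if (\<Sum>j<n. (if g i j then 1 else 0) * Zind S j) > (0::real) then 1 else 0)"

definition Ypot :: "(nat \<Rightarrow> real) \<Rightarrow> (nat \<Rightarrow> real) \<Rightarrow> (nat \<Rightarrow> real) \<Rightarrow> (nat \<Rightarrow> real)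
    \<Rightarrow> nat \<Rightarrow> real \<Rightarrow> real \<Rightarrow> real" where
  "Ypot \<alpha> \<beta> \<gamma> \<theta> i z e = \<alpha> i + \<beta> i * z + \<gamma> i * e + \<theta> i * z * e"

definition Yobs where
  "Yobs n g \<alpha> \<beta> \<gamma> \<theta> S i = Ypot \<alpha> \<beta> \<gamma> \<theta> i (Zind S i) (expo n g S i)"

definition beta_naive where
  "beta_naive n g \<alpha> \<beta> \<gamma> \<theta> S =
     (\<Sum>i<n. Yobs n g \<alpha> \<beta> \<gamma> \<theta> S i * Zind S i) / (\<Sum>i<n. Zind S i)
   - (\<Sum>i<n. Yobs n g \<alpha> \<beta> \<gamma> \<theta> S i * (1 - Zind S i)) / (\<Sum>i<n. 1 - Zind S i)"

definition DTE where
  "DTE n \<alpha> \<beta> \<gamma> \<theta> = (1 / real n) * (\<Sum>i<n. Ypot \<alpha> \<beta> \<gamma> \<theta> i 1 0 - Ypot \<alpha> \<beta> \<gamma> \<theta> i 0 0)"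

end

theory Submission
  imports Defs
begin

lemma choose_swap: "((m::nat) - d choose k) * (m choose d) = (m - k choose d) * (m choose k)"
proof (cases "d + k \<le> m")
  case True
  have a: "(m choose (d+k)) * ((d+k) choose d) = (m choose d) * ((m - d) choose k)"
    using choose_mult[of d "d+k" m] True by simp
  have b: "(m choose (d+k)) * ((d+k) choose k) = (m choose k) * ((m - k) choose d)"
    using choose_mult[of k "d+k" m] True by simp
  have "((d+k) choose d) = ((d+k) choose k)"
    using binomial_symmetric[of d "d+k"] by simp
  then show ?thesis using a b by (simp add: mult.commute)
next
  case False
  have l: "((m - d) choose k) * (m choose d) = 0"
    using False by (cases "d \<le> m") (auto simp: binomial_eq_0)
  have r: "((m - k) choose d) * (m choose k) = 0"
    using False by (cases "k \<le> m") (auto simp: binomial_eq_0)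
  show ?thesis by (simp only: l r)
qed

lemma count_avoid:
  assumes "C \<subseteq> {..<n}"
  shows "card {S \<in> {S. S \<subseteq> {..<n} \<and> card S = k}. S \<inter> C = {}} = (n - card C) choose k"
proof -
  have "{S \<in> {S. S \<subseteq> {..<n} \<and> card S = k}. S \<inter> C = {}} = {S. S \<subseteq> {..<n} - C \<and> card S = k}"
    by auto
  moreover have "card ({..<n} - C) = n - card C"
    using assms by (simp add: card_Diff_subset finite_subset)
  ultimately show ?thesis by (simp add: n_subsets)
qed

lemma sum_avoid:
  assumes "C \<subseteq> {..<n}"
  shows "(\<Sum>S\<in>{S. S \<subseteq> {..<n} \<and> card S = k}. (of_bool (S \<inter> C = {}) :: real)) = real ((n - card C) choose k)"
proof -
  have fin: "finite {S. S \<subseteq> {..<n} \<and> card S = k}" by simp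
  show ?thesis using count_avoid[OF assms, of k] 
    by (simp add: sum_of_bool_eq[OF fin] Int_def)
qed

lemma natm1: "nat (int x - 1) = x - 1"
  by auto

lemma key_alg:
  fixes M a b c p q n nt nc D C1 C2 X Y W G :: real
  assumes "M > 0" "nt > 0" "nc > 0" "n > 0" "D > 0"
    "p = M - a" "p * n = nt * M" "a * n = nc * M" "q = b - c" "q * D = C1 * p" "c * D = C2 * a"
  shows "((X*(M-a) - Y*(b-c))/nt - (W*a - G*c)/nc)/M = (1/n)*(X - Y*C1/D - W + G*C2/D)"
proof -
  have e0: "p/(nt*M) = 1/n" using assms(1,2,4,7) by (simp add: field_simps)
  have e1: "(M - a)/(nt*M) = 1/n" using e0 assms(6) by simp
  have "q = C1 * p / D" using assms(5,10) by (simp add: field_simps)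
  then have "q/(nt*M) = (C1/D) * (p/(nt*M))" by simp
  then have e2: "(b - c)/(nt*M) = C1/(D*n)" using e0 assms(9) by simp
  have e3: "a/(nc*M) = 1/n" using assms by (simp add: field_simps)
  have "c = C2 * a / D" using assms(5,11) by (simp add: field_simps)
  then have "c/(nc*M) = (C2/D) * (a/(nc*M))" by simp
  then have e4: "c/(nc*M) = C2/(D*n)" using e3 by simp
  have "((X*(M-a) - Y*(b-c))/nt - (W*a - G*c)/nc)/M
     = X*((M - a)/(nt*M)) - Y*((b - c)/(nt*M)) - W*(a/(nc*M)) + G*(c/(nc*M))"
    using assms by (simp add: field_simps)
  also have "\<dots> = (1/n)*(X - Y*C1/D - W + G*C2/D)"
    unfolding e1 e2 e3 e4 using assms(4,5) by (simp add: field_simps)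
  finally show ?thesis .
qed

theorem proposition14:
  fixes n nt :: nat and g :: "nat \<Rightarrow> nat \<Rightarrow> bool"
    and \<alpha> \<beta> \<gamma> \<theta> :: "nat \<Rightarrow> real"
  assumes "simple_graph n g"
    and "1 \<le> nt" and "nt \<le> n - 1"
  shows "measure_pmf.expectation (crd n nt) (beta_naive n g \<alpha> \<beta> \<gamma> \<theta>) - DTE n \<alpha> \<beta> \<gamma> \<theta>
    = - (1 / real n) * (\<Sum>i<n. \<gamma> i * ibinom (int (n - nt) - 1) (int (degree n g i) - 1)
                                      / ibinom (int n - 1) (int (degree n g i)))
      + (1 / real n) * (\<Sum>i<n. \<theta> i * (1 - ibinom (int (n - nt)) (int (degree n g i))
                                      / ibinom (int n - 1) (int (degree n g i))))"
proof -
  define SS where "SS = {S. S \<subseteq> {..<n} \<and> card S = nt}"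
  define N where "N i = {j. j < n \<and> g i j}" for i
  define I where "I C S = (of_bool (S \<inter> C = {}) :: real)" for C S :: "nat set"
  define nc where "nc = n - nt"
  define M where "M = real (n choose nt)"
  define X where "X i = \<alpha> i + \<beta> i + \<gamma> i + \<theta> i" for i
  define Y where "Y i = \<gamma> i + \<theta> i" for i
  define W where "W i = \<alpha> i + \<gamma> i" for i
  have n2: "n \<ge> 2" and ntn: "nt < n" and nc1: "nc \<ge> 1" using assms(2,3) by (auto simp: nc_def)
  have finSS: "finite SS" unfolding SS_def by simp
  have SSne: "SS \<noteq> {}"
  proof -
    have "{..<nt} \<in> SS" using ntn unfolding SS_def by auto
    then show ?thesis by auto
  qed
  have cardSS: "real (card SS) = M" unfolding SS_def M_def by (simp add: n_subsets)
  have Nsub: "N i \<subseteq> {..<n} - {i}" if "i < n" for i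
    using assms(1) that unfolding N_def simple_graph_def by auto
  have dN: "degree n g i = card (N i)" for i unfolding degree_def N_def by simp
  have dle: "degree n g i \<le> n - 1" if "i < n" for i
  proof -
    have "card (N i) \<le> card ({..<n} - {i})" using Nsub[OF that] by (intro card_mono) auto
    then show ?thesis using that dN by simp
  qed
  have iN: "i \<notin> N i" if "i < n" for i using Nsub[OF that] by auto
  have Z: "Zind S i = 1 - I {i} S" for S i unfolding Zind_def I_def by auto
  have E: "expo n g S i = 1 - I (N i) S" for S i
  proof -
    have "(\<Sum>j<n. (if g i j then 1 else 0) * Zind S j) > (0::real) \<longleftrightarrow> (\<exists>j<n. g i j \<and> j \<in> S)"
    proof
      assume "(\<Sum>j<n. (if g i j then 1 else 0) * Zind S j) > (0::real)"
      then obtain j where "j < n" "(if g i j then 1 else 0) * Zind S j \<noteq> (0::real)"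
        by (metis (no_types, lifting) lessThan_iff less_irrefl sum.neutral)
      then show "\<exists>j<n. g i j \<and> j \<in> S" unfolding Zind_def by (auto split: if_splits)
    next
      assume "\<exists>j<n. g i j \<and> j \<in> S"
      then obtain j where j: "j < n" "g i j" "j \<in> S" by auto
      have "(\<Sum>j<n. (if g i j then 1 else 0) * Zind S j) \<ge> (if g i j then 1 else 0) * Zind S j"
        by (rule member_le_sum) (use j in \<open>auto simp: Zind_def\<close>)
      then show "(\<Sum>j<n. (if g i j then 1 else 0) * Zind S j) > (0::real)" using j by (simp add: Zind_def)
    qed
    then show ?thesis unfolding expo_def I_def N_def by auto
  qed
  have II: "I {i} S * I (N i) S = I (insert i (N i)) S" for i S unfolding I_def by auto
  have YZ: "Yobs n g \<alpha> \<beta> \<gamma> \<theta> S i * Zind S i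
      = X i * (1 - I {i} S) - Y i * (I (N i) S - I (insert i (N i)) S)" for S i
    unfolding Yobs_def Ypot_def Z E X_def Y_def
    by (cases "i \<in> S"; cases "S \<inter> N i = {}") (auto simp: I_def algebra_simps)
  have YC: "Yobs n g \<alpha> \<beta> \<gamma> \<theta> S i * (1 - Zind S i)
      = W i * I {i} S - \<gamma> i * I (insert i (N i)) S" for S i
    unfolding Yobs_def Ypot_def Z E W_def
    by (cases "i \<in> S"; cases "S \<inter> N i = {}") (auto simp: I_def algebra_simps)
  have sumZ: "(\<Sum>i<n. Zind S i) = real nt" if "S \<in> SS" for S
  proof -
    have "(\<Sum>i<n. Zind S i) = (\<Sum>i<n. of_bool (i \<in> S))" by (rule sum.cong) (auto simp: Zind_def)
    also have "\<dots> = real (card ({..<n} \<inter> {i. i \<in> S}))" by (rule sum_of_bool_eq) simp_all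
    also have "{..<n} \<inter> {i. i \<in> S} = S" using that unfolding SS_def by auto
    finally show ?thesis using that unfolding SS_def by simp
  qed
  have sumC: "(\<Sum>i<n. 1 - Zind S i) = real nc" if "S \<in> SS" for S
    using sumZ[OF that] ntn by (simp add: sum_subtractf nc_def)
  define F where "F i S = (X i * (1 - I {i} S) - Y i * (I (N i) S - I (insert i (N i)) S)) / real nt
      - (W i * I {i} S - \<gamma> i * I (insert i (N i)) S) / real nc" for i S
  have bn: "beta_naive n g \<alpha> \<beta> \<gamma> \<theta> S = (\<Sum>i<n. F i S)" if "S \<in> SS" for S
    unfolding beta_naive_def sumZ[OF that] sumC[OF that] YZ YC F_def
    by (simp only: sum_subtractf sum_divide_distrib[symmetric])
  have sI: "(\<Sum>S\<in>SS. I C S) = real ((n - card C) choose nt)" if "C \<subseteq> {..<n}" for C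
    unfolding SS_def I_def using sum_avoid[OF that] by simp
  define d where "d i = degree n g i" for i
  define a where "a = real ((n - 1) choose nt)"
  define b where "b i = real ((n - d i) choose nt)" for i
  define c where "c i = real ((n - Suc (d i)) choose nt)" for i
  define D where "D i = real ((n - 1) choose d i)" for i
  define C1 where "C1 i = real (nc choose d i)" for i
  define C2 where "C2 i = real ((nc - 1) choose d i)" for i
  have sM: "(\<Sum>S\<in>SS. (1::real)) = M" using cardSS by simp
  have sF: "(\<Sum>S\<in>SS. F i S) = (X i*(M - a) - Y i*(b i - c i))/real nt - (W i * a - \<gamma> i * c i)/real nc"
    if i: "i < n" for i
  proof -
    have s1: "(\<Sum>S\<in>SS. I {i} S) = a" using sI[of "{i}"] i unfolding a_def by simp
    have s2: "(\<Sum>S\<in>SS. I (N i) S) = b i" using sI[of "N i"] Nsub[OF i] unfolding b_def d_def dN by auto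
    have s3: "(\<Sum>S\<in>SS. I (insert i (N i)) S) = c i"
    proof -
      have "card (insert i (N i)) = Suc (d i)"
        using iN[OF i] Nsub[OF i] unfolding d_def dN by (simp add: finite_subset)
      moreover have "insert i (N i) \<subseteq> {..<n}" using i Nsub[OF i] by auto
      ultimately show ?thesis using sI[of "insert i (N i)"] unfolding c_def by simp
    qed
    have "(\<Sum>S\<in>SS. F i S) = (X i * ((\<Sum>S\<in>SS. 1) - (\<Sum>S\<in>SS. I {i} S))
        - Y i * ((\<Sum>S\<in>SS. I (N i) S) - (\<Sum>S\<in>SS. I (insert i (N i)) S))) / real nt
      - (W i * (\<Sum>S\<in>SS. I {i} S) - \<gamma> i * (\<Sum>S\<in>SS. I (insert i (N i)) S)) / real nc"
      unfolding F_def by (simp add: sum_subtractf sum_divide_distrib[symmetric] sum_distrib_left right_diff_distrib)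
    then show ?thesis unfolding s1 s2 s3 sM .
  qed
  define p where "p = real ((n - 1) choose (nt - 1))"
  define q where "q i = real ((n - 1 - d i) choose (nt - 1))" for i
  have ntpos: "real nt > 0" and ncpos: "real nc > 0" and npos: "real n > 0" using assms(2) nc1 n2 by auto
  have Mpos: "M > 0" unfolding M_def using ntn by simp
  have hp: "p = M - a"
    using choose_reduce_nat[of n nt] ntn assms(2) unfolding p_def M_def a_def by simp
  have hpn: "p * real n = real nt * M"
  proof -
    have "nt * (n choose nt) = n * ((n - 1) choose (nt - 1))" using times_binomial_minus1_eq assms(2) by simp
    then have "real nt * real (n choose nt) = real n * real ((n - 1) choose (nt - 1))" by (simp only: of_nat_mult[symmetric])
    then show ?thesis unfolding p_def M_def by (simp add: mult.commute)
  qed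
  have han: "a * real n = real nc * M"
  proof -
    have "(n - nt) * (n choose nt) = n * ((n - 1) choose nt)" by (rule binomial_absorb_comp)
    then have "real (n - nt) * real (n choose nt) = real n * real ((n - 1) choose nt)" by (simp only: of_nat_mult[symmetric])
    then show ?thesis unfolding a_def M_def nc_def by (simp add: mult.commute)
  qed
  have final_i: "(\<Sum>S\<in>SS. F i S) / M = (1/real n) * (X i - Y i * C1 i / D i - W i + \<gamma> i * C2 i / D i)"
    if i: "i < n" for i
  proof -
    have di: "d i \<le> n - 1" using dle[OF i] unfolding d_def .
    have hq: "q i = b i - c i"
    proof -
      have r: "(n - d i) choose nt = ((n - d i - 1) choose (nt-1)) + ((n - d i - 1) choose nt)"
        by (rule choose_reduce_nat) (use di assms(2) n2 in auto)
      have e1: "n - d i - 1 = n - Suc (d i)" and e2: "n - 1 - d i = n - Suc (d i)" by auto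
      have r2: "(n - d i) choose nt = ((n - Suc (d i)) choose (nt-1)) + ((n - Suc (d i)) choose nt)"
        using r unfolding e1 .
      show ?thesis unfolding q_def b_def c_def e2 r2 by simp
    qed
    have hqD: "q i * D i = C1 i * p"
    proof -
      have "((n - 1) - d i choose (nt - 1)) * ((n - 1) choose d i) = ((n - 1) - (nt - 1) choose d i) * ((n - 1) choose (nt - 1))"
        by (rule choose_swap)
      moreover have "(n - 1) - (nt - 1) = nc" unfolding nc_def using assms(2) ntn by simp
      ultimately show ?thesis unfolding q_def D_def C1_def p_def by (simp only: of_nat_mult[symmetric])
    qed
    have hcD: "c i * D i = C2 i * a"
    proof -
      have "((n - 1) - d i choose nt) * ((n - 1) choose d i) = ((n - 1) - nt choose d i) * ((n - 1) choose nt)"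
        by (rule choose_swap)
      moreover have "(n - 1) - nt = nc - 1" unfolding nc_def by simp
      moreover have "n - Suc (d i) = (n - 1) - d i" by simp
      ultimately show ?thesis unfolding c_def D_def C2_def a_def by (simp only: of_nat_mult[symmetric])
    qed
    have Dpos: "D i > 0" unfolding D_def using di by simp
    show ?thesis unfolding sF[OF i]
      by (rule key_alg[OF Mpos ntpos ncpos npos Dpos hp hpn han hq hqD hcD])
  qed
  have expE: "measure_pmf.expectation (crd n nt) (beta_naive n g \<alpha> \<beta> \<gamma> \<theta>)
      = (\<Sum>i<n. (1/real n) * (X i - Y i * C1 i / D i - W i + \<gamma> i * C2 i / D i))"
  proof -
    have "measure_pmf.expectation (crd n nt) (beta_naive n g \<alpha> \<beta> \<gamma> \<theta>)
        = (\<Sum>S\<in>SS. beta_naive n g \<alpha> \<beta> \<gamma> \<theta> S) / M"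
      unfolding crd_def SS_def[symmetric] cardSS[symmetric]
      by (rule integral_pmf_of_set[OF SSne finSS])
    also have "\<dots> = (\<Sum>S\<in>SS. \<Sum>i<n. F i S) / M" using bn by simp
    also have "\<dots> = (\<Sum>i<n. \<Sum>S\<in>SS. F i S) / M" by (simp only: sum.swap[of _ SS])
    also have "\<dots> = (\<Sum>i<n. (\<Sum>S\<in>SS. F i S) / M)" by (simp only: sum_divide_distrib)
    also have "\<dots> = (\<Sum>i<n. (1/real n) * (X i - Y i * C1 i / D i - W i + \<gamma> i * C2 i / D i))"
      using final_i by simp
    finally show ?thesis .
  qed
  have dte: "DTE n \<alpha> \<beta> \<gamma> \<theta> = (\<Sum>i<n. (1/real n) * \<beta> i)"
    unfolding DTE_def Ypot_def by (simp add: sum_distrib_left)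
  have per_i: "(1/real n) * (X i - Y i * C1 i / D i - W i + \<gamma> i * C2 i / D i) - (1/real n) * \<beta> i
     = - (1 / real n) * (\<gamma> i * ibinom (int (n - nt) - 1) (int (degree n g i) - 1)
                                      / ibinom (int n - 1) (int (degree n g i)))
      + (1 / real n) * (\<theta> i * (1 - ibinom (int (n - nt)) (int (degree n g i))
                                      / ibinom (int n - 1) (int (degree n g i))))"
    if i: "i < n" for i
  proof -
    have di: "d i \<le> n - 1" using dle[OF i] unfolding d_def .
    have ibD: "ibinom (int n - 1) (int (degree n g i)) = D i"
    proof -
      have "nat (int n - 1) = n - 1" by simp
      then show ?thesis using di n2 unfolding ibinom_def D_def d_def by auto
    qed
    have ibB: "ibinom (int (n - nt)) (int (degree n g i)) = C1 i"
      unfolding ibinom_def C1_def d_def nc_def by (auto simp: binomial_eq_0)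
    have ibA: "ibinom (int (n - nt) - 1) (int (degree n g i) - 1) = C1 i - C2 i"
    proof (cases "d i = 0")
      case True
      then show ?thesis unfolding ibinom_def C1_def C2_def d_def by simp
    next
      case False
      have r: "nc choose d i = (nc - 1 choose (d i - 1)) + (nc - 1 choose d i)"
        by (rule choose_reduce_nat) (use False nc1 in auto)
      have e1: "nat (int (n - nt) - 1) = nc - 1" unfolding nc_def using nc1 nc_def by simp
      have e2: "nat (int (degree n g i) - 1) = d i - 1" unfolding d_def by simp
      show ?thesis
      proof (cases "d i > nc")
        case True
        then show ?thesis unfolding ibinom_def C1_def C2_def d_def[symmetric] nc_def[symmetric]
          using False by (auto simp: binomial_eq_0)
      next
        case F2: False
        then have "\<not> (int (d i) - 1 < 0 \<or> int (d i) - 1 > int nc - 1)" using False by auto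
        have r': "(n - nt) choose degree n g i = ((n - nt) - 1 choose (degree n g i - 1)) + ((n - nt) - 1 choose degree n g i)"
          using r unfolding nc_def d_def .
        have e3: "nat (int n - int nt - 1) = n - Suc nt" using ntn by auto
        have e4: "\<not> int n - int nt < int (degree n g i)" using F2 ntn unfolding d_def nc_def by auto
        show ?thesis using F2 False ntn unfolding ibinom_def C1_def C2_def d_def nc_def
          by (simp add: natm1 r' e3 e4 of_nat_diff)
      qed
    qed
    have Dpos: "D i > 0" unfolding D_def using di by simp
    show ?thesis unfolding ibA ibB ibD X_def Y_def W_def using Dpos npos
      by (simp add: field_simps)
  qed
  have "measure_pmf.expectation (crd n nt) (beta_naive n g \<alpha> \<beta> \<gamma> \<theta>) - DTE n \<alpha> \<beta> \<gamma> \<theta>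
     = (\<Sum>i<n. (1/real n) * (X i - Y i * C1 i / D i - W i + \<gamma> i * C2 i / D i) - (1/real n) * \<beta> i)"
    unfolding expE dte by (simp only: sum_subtractf)
  also have "\<dots> = (\<Sum>i<n. - (1 / real n) * (\<gamma> i * ibinom (int (n - nt) - 1) (int (degree n g i) - 1)
                                      / ibinom (int n - 1) (int (degree n g i)))
      + (1 / real n) * (\<theta> i * (1 - ibinom (int (n - nt)) (int (degree n g i))
                                      / ibinom (int n - 1) (int (degree n g i)))))"
    by (rule sum.cong[OF refl], rule per_i, simp)
  also have "\<dots> = - (1 / real n) * (\<Sum>i<n. \<gamma> i * ibinom (int (n - nt) - 1) (int (degree n g i) - 1)
                                      / ibinom (int n - 1) (int (degree n g i)))
      + (1 / real n) * (\<Sum>i<n. \<theta> i * (1 - ibinom (int (n - nt)) (int (degree n g i))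
                                      / ibinom (int n - 1) (int (degree n g i))))"
    by (simp only: sum.distrib sum_distrib_left)
  finally show ?thesis .
qed

end
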